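(* Assume the stochastic matrix $A$ is irreducible, aperiodic, and symmetric, and let $1>\gamma_2\geq\cdots\geq\gamma_N>-1$ be the eigenvalues of $A$ other than the (simple) eigenvalue $1$, listed with multiplicity. Then for every $t\geq 1$, $$\tau_t(A)=\frac{1}{1+\frac{1}{t}\sum_{\ell=2}^N\frac{1-\gamma_\ell^{2t}}{1-\gamma_\ell^2}}.$$ Moreover, setting $\mathscr S(A)=\sum_{\ell=2}^N\frac{1}{1-\gamma_\ell^2}$ and $\Gamma(A)=\max_{2\leq\ell\leq N}|\gamma_\ell|$, for all $t\geq 1$, $$1-\frac{\mathscr S(A)}{t}\leq\tau_t(A)\leq 1-\frac{\mathscr S(A)}{t}+\Gamma(A)^{2t}\frac{\mathscr S(A)}{t}+\Big(\frac{\mathscr S(A)}{t}\Big)^2 .$$ In particular $t(1-\tau_t(A))\to\mathscr S(A)$ as $t\to\infty$.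
   Context: Let $X$ be a square-integrable real random variable with $\mathbb E X=\theta$ and $\mathrm{Var}(X)=\sigma^2>0$. Fix an integer $N\geq 2$. For $i\in\{1,\dots,N\}$ and $t\geq 1$ let $X_t^{(i)}$ be random variables distributed as $X$, mutually independent over both $i$ and $t$, and write $\mathbf X_t=(X_t^{(1)},\dots,X_t^{(N)})^\top$. Let $A=(a_{ij})_{1\le i,j\le N}$ be a stochastic matrix ($a_{ij}\geq 0$ and every row sums to $1$). Define $\hat{\boldsymbol\theta}_1=\mathbf X_1$ and $\hat{\boldsymbol\theta}_{t+1}=\frac{t}{t+1}A\hat{\boldsymbol\theta}_t+\frac{1}{t+1}\mathbf X_{t+1}$ for $t\geq 1$. Let $\bar{\mathbb X}_{Nt}=\frac{1}{Nt}\sum_{i=1}^N\sum_{k=1}^t X_k^{(i)}$, $\mathbf 1=(1,\dots,1)^\top$, and let $\|\cdot\|$ denote the Euclidean norm. The performance ratio is $\tau_t(A)=\dfrac{\mathbb E\|(\bar{\mathbb X}_{Nt}-\theta)\mathbf 1\|^2}{\mathbb E\|\hat{\boldsymbol\theta}_t-\theta\mathbf 1\|^2}$, $t\geq 1$. $A$ is irreducible if for every $(i,j)$ there is $k\geq 0$ with $(A^k)_{ij}\neq 0$; aperiodic means the gcd of all $k\geq1$ with $(A^k)_{ii}>0$ equals $1$. *)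

theory Defs
  imports "HOL-Analysis.Analysis" "HOL-Probability.Probability"
begin

text \<open>Matrices are indexed by a finite type 'n with N = CARD('n) nodes.\<close>

definition matpow :: "real^'n^'n \<Rightarrow> nat \<Rightarrow> real^'n^'n" where
  "matpow A k = ((\<lambda>B. A ** B) ^^ k) (mat 1)"

definition stochastic_matrix :: "real^'n^'n \<Rightarrow> bool" where
  "stochastic_matrix A \<longleftrightarrow> (\<forall>i j. A $ i $ j \<ge> 0) \<and> (\<forall>i. (\<Sum>j\<in>UNIV. A $ i $ j) = 1)"

definition irreducible_matrix :: "real^'n^'n \<Rightarrow> bool" where
  "irreducible_matrix A \<longleftrightarrow> (\<forall>i j. \<exists>k. matpow A k $ i $ j \<noteq> 0)"

definition aperiodic_matrix :: "real^'n^'n \<Rightarrow> bool" where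
  "aperiodic_matrix A \<longleftrightarrow> (\<forall>i. Gcd {k::nat. k \<ge> 1 \<and> matpow A k $ i $ i > 0} = 1)"

definition ones :: "real^'n" where
  "ones = (\<chi> i. 1)"

text \<open>Observation vector at time t: X t i is the observation of agent i at time t (t \<ge> 1).\<close>
definition Xvec :: "(nat \<Rightarrow> 'n \<Rightarrow> 'a \<Rightarrow> real) \<Rightarrow> nat \<Rightarrow> 'a \<Rightarrow> real^'n" where
  "Xvec X t \<omega> = (\<chi> i. X t i \<omega>)"

text \<open>Estimates: theta_hat 1 = X_1, theta_hat (t+1) = t/(t+1) A theta_hat t + 1/(t+1) X_(t+1).
  The value at t = 0 is an irrelevant placeholder.\<close>
fun theta_hat :: "real^'n^'n \<Rightarrow> (nat \<Rightarrow> 'n \<Rightarrow> 'a \<Rightarrow> real) \<Rightarrow> nat \<Rightarrow> 'a \<Rightarrow> real^'n" where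
  "theta_hat A X 0 \<omega> = 0"
| "theta_hat A X (Suc 0) \<omega> = Xvec X 1 \<omega>"
| "theta_hat A X (Suc (Suc t)) \<omega> =
     (real (Suc t) / real (Suc (Suc t))) *\<^sub>R (A *v theta_hat A X (Suc t) \<omega>)
     + (1 / real (Suc (Suc t))) *\<^sub>R Xvec X (Suc (Suc t)) \<omega>"

definition grand_mean :: "(nat \<Rightarrow> 'n::finite \<Rightarrow> 'a \<Rightarrow> real) \<Rightarrow> nat \<Rightarrow> 'a \<Rightarrow> real" where
  "grand_mean X t \<omega> = (\<Sum>i\<in>UNIV. \<Sum>k\<in>{1..t}. X k i \<omega>) / (real CARD('n) * real t)"

definition perf_ratio :: "'a measure \<Rightarrow> real^'n^'n \<Rightarrow> (nat \<Rightarrow> 'n \<Rightarrow> 'a \<Rightarrow> real) \<Rightarrow> real \<Rightarrow> nat \<Rightarrow> real" where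
  "perf_ratio M A X \<theta> t =
     (\<integral>\<omega>. (norm ((grand_mean X t \<omega> - \<theta>) *\<^sub>R (ones::real^'n)))\<^sup>2 \<partial>M) /
     (\<integral>\<omega>. (norm (theta_hat A X t \<omega> - \<theta> *\<^sub>R ones))\<^sup>2 \<partial>M)"

end

theory Submission
  imports Defs "Jordan_Normal_Form.Schur_Decomposition"
begin
hide_const (open) Matrix.mat Determinant.det

definition toJ :: "(nat \<Rightarrow> 'n) \<Rightarrow> 'a^'n^'n \<Rightarrow> 'a Matrix.mat" where
  "toJ e B = Matrix.mat CARD('n::finite) CARD('n) (\<lambda>(i,j). B $ e i $ e j)"

lemma toJ_carrier[simp]: "toJ e (B::'a^'n^'n) \<in> carrier_mat CARD('n::finite) CARD('n)"
  by (simp add: toJ_def)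

lemma toJ_dim[simp]: "dim_row (toJ e (B::'a^'n^'n)) = CARD('n::finite)" "dim_col (toJ e (B::'a^'n^'n)) = CARD('n::finite)"
  by (simp_all add: toJ_def)

lemma toJ_index[simp]: "i < CARD('n) \<Longrightarrow> j < CARD('n) \<Longrightarrow> toJ e (B::'a^'n^'n::finite) $$ (i,j) = B $ e i $ e j"
  by (simp add: toJ_def)

lemma sum_transfer:
  assumes "bij_betw e {0..<CARD('n)} (UNIV::'n::finite set)"
  shows "(\<Sum>i<CARD('n). f (e i)) = (\<Sum>a\<in>UNIV. f a)"
  using sum.reindex_bij_betw[OF assms, of f] by (simp add: lessThan_atLeast0)

lemma toJ_mult:
  assumes "bij_betw e {0..<CARD('n)} (UNIV::'n::finite set)"
  shows "toJ e ((A::'a::comm_semiring_1^'n^'n) ** B) = toJ e A * toJ e B"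
proof (rule eq_matI)
  fix i j assume ij: "i < dim_row (toJ e A * toJ e B)" "j < dim_col (toJ e A * toJ e B)"
  hence ij': "i < CARD('n)" "j < CARD('n)" by auto
  have "(toJ e A * toJ e B) $$ (i,j) = (\<Sum>k<CARD('n). A $ e i $ e k * B $ e k $ e j)"
    using ij' by (simp add: index_mult_mat scalar_prod_def lessThan_atLeast0)
  also have "\<dots> = (\<Sum>k\<in>UNIV. A $ e i $ k * B $ k $ e j)"
    by (rule sum_transfer[OF assms, of "\<lambda>k. A $ e i $ k * B $ k $ e j"])
  finally show "toJ e (A ** B) $$ (i, j) = (toJ e A * toJ e B) $$ (i, j)"
    using ij' by (simp add: matrix_matrix_mult_def)
qed auto

lemma toJ_one:
  assumes "bij_betw e {0..<CARD('n)} (UNIV::'n::finite set)"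
  shows "toJ e (mat 1 :: 'a::semiring_1^'n^'n) = 1\<^sub>m CARD('n)"
proof (rule eq_matI)
  fix i j assume "i < dim_row (1\<^sub>m CARD('n)::'a Matrix.mat)" "j < dim_col (1\<^sub>m CARD('n)::'a Matrix.mat)"
  hence ij: "i < CARD('n)" "j < CARD('n)" by auto
  have "e i = e j \<longleftrightarrow> i = j" using ij assms unfolding bij_betw_def inj_on_def by auto
  thus "toJ e (mat 1 :: 'a::semiring_1^'n^'n) $$ (i, j) = (1\<^sub>m CARD('n)::'a Matrix.mat) $$ (i, j)"
    using ij by (simp add: Finite_Cartesian_Product.mat_def)
qed auto

lemma matpow_Suc': "matpow A (Suc m) = matpow A m ** A"
proof (induction m)
  case 0 thus ?case by (simp add: matpow_def)
next
  case (Suc m)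
  have "matpow A (Suc (Suc m)) = A ** matpow A (Suc m)" by (simp add: matpow_def)
  also have "\<dots> = A ** (matpow A m ** A)" using Suc by simp
  also have "\<dots> = (A ** matpow A m) ** A" by (simp add: matrix_mul_assoc)
  also have "A ** matpow A m = matpow A (Suc m)" by (simp add: matpow_def)
  finally show ?case .
qed

lemma toJ_pow:
  assumes "bij_betw e {0..<CARD('n)} (UNIV::'n::finite set)"
  shows "toJ e (matpow (A::real^'n^'n) m) = toJ e A ^\<^sub>m m"
proof (induction m)
  case 0 thus ?case by (simp add: matpow_def toJ_one[OF assms])
next
  case (Suc m) thus ?case by (simp add: matpow_Suc' toJ_mult[OF assms])
qed

lemma det_toJ:
  assumes e: "bij_betw e {0..<CARD('n)} (UNIV::'n::finite set)"
  shows "Determinant.det (toJ e (B::'a::comm_ring_1^'n^'n)) = det B"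
proof -
  let ?n = "CARD('n)"
  let ?S = "{q. q permutes {0..<?n}}" and ?T = "{p. p permutes (UNIV::'n set)}"
  let ?j = "map_permutation {0..<?n} e" and ?i = "map_permutation UNIV (inv_into {0..<?n} e)"
  have inj: "inj_on e {0..<?n}" using e by (simp add: bij_betw_def)
  have ie: "bij_betw (inv_into {0..<?n} e) UNIV {0..<?n}" using e by (rule bij_betw_inv_into)
  have "Determinant.det (toJ e B) = (\<Sum>q\<in>?S. of_int (sign q) * (\<Prod>i = 0..<?n. toJ e B $$ (i, q i)))"
    by (rule det_def'[OF toJ_carrier])
  also have "\<dots> = (\<Sum>p\<in>?T. of_int (sign p) * prod (\<lambda>i. B$i$p i) UNIV)"
  proof (rule sum.reindex_bij_witness[of _ ?i ?j])
    fix q assume q: "q \<in> ?S"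
    show "?i (?j q) = q"
      by (rule map_permutation_compose_inv[OF e]) (use q inj in auto)
    show "?j q \<in> ?T" using map_permutation_permutes[OF e] q by auto
    have sg: "sign (?j q) = sign q" by (rule sign_map_permutation) (use q inj in auto)
    have "prod (\<lambda>a. B$a$(?j q a)) UNIV = (\<Prod>i\<in>{0..<?n}. B$(e i)$(?j q (e i)))"
      using prod.reindex_bij_betw[OF e, of "\<lambda>a. B$a$(?j q a)"] by simp
    also have "\<dots> = (\<Prod>i = 0..<?n. toJ e B $$ (i, q i))"
    proof (rule prod.cong[OF refl])
      fix i assume i: "i \<in> {0..<?n}"
      have "q i \<in> {0..<?n}" using q i permutes_in_image by fastforce
      thus "B$(e i)$(?j q (e i)) = toJ e B $$ (i, q i)"
        using i by (simp add: map_permutation_apply[OF inj i])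
    qed
    finally show "of_int (sign (?j q)) * prod (\<lambda>a. B$a$(?j q a)) UNIV =
        of_int (sign q) * (\<Prod>i = 0..<?n. toJ e B $$ (i, q i))" using sg by simp
  next
    fix p assume p: "p \<in> ?T"
    show "?j (?i p) = p"
      by (rule map_permutation_compose_inv[OF ie]) (use p e in \<open>auto simp: f_inv_into_f bij_betw_def\<close>)
    show "?i p \<in> ?S" using map_permutation_permutes[OF ie] p by auto
  qed
  also have "\<dots> = det B" by (simp add: Determinants.det_def)
  finally show ?thesis .
qed

definition mtr :: "'a::comm_semiring_1 Matrix.mat \<Rightarrow> 'a" where
  "mtr M = (\<Sum>i<dim_row M. M $$ (i,i))"

lemma mtr_comm:
  assumes "A \<in> carrier_mat n k" "B \<in> carrier_mat k n"
  shows "mtr (A * B) = mtr (B * A)"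
proof -
  have "mtr (A * B) = (\<Sum>i<n. \<Sum>j<k. A $$ (i,j) * B $$ (j,i))"
    using assms by (simp add: mtr_def index_mult_mat scalar_prod_def lessThan_atLeast0)
  also have "\<dots> = (\<Sum>j<k. \<Sum>i<n. B $$ (j,i) * A $$ (i,j))"
    by (subst sum.swap) (simp add: mult.commute)
  also have "\<dots> = mtr (B * A)"
    using assms by (simp add: mtr_def index_mult_mat scalar_prod_def lessThan_atLeast0)
  finally show ?thesis .
qed

lemma upper_pow:
  assumes B: "B \<in> carrier_mat n n" and ut: "upper_triangular (B::'a::comm_semiring_1 Matrix.mat)"
  shows "upper_triangular (B ^\<^sub>m m) \<and> (\<forall>i<n. (B ^\<^sub>m m) $$ (i,i) = B $$ (i,i) ^ m)"
proof (induction m)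
  case 0 thus ?case using B by auto
next
  case (Suc m)
  have C: "B ^\<^sub>m m \<in> carrier_mat n n" using B by simp
  have ut': "upper_triangular (B ^\<^sub>m m)" and dg: "\<forall>i<n. (B ^\<^sub>m m) $$ (i,i) = B $$ (i,i) ^ m"
    using Suc by auto
  have ent: "(B ^\<^sub>m Suc m) $$ (i,j) = (\<Sum>k\<in>{0..<n}. (B ^\<^sub>m m) $$ (i,k) * B $$ (k,j))"
    if "i < n" "j < n" for i j using that B C by (simp add: index_mult_mat scalar_prod_def)
  have z1: "(B ^\<^sub>m m) $$ (i,k) = 0" if "k < i" "i < n" for i k
    using ut' that C by (auto elim!: upper_triangularD)
  have z2: "B $$ (k,j) = 0" if "j < k" "k < n" for j k
    using ut that B by (auto elim!: upper_triangularD)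
  have "upper_triangular (B ^\<^sub>m Suc m)"
  proof (rule upper_triangularI)
    fix i j assume ji: "j < i" and i: "i < dim_row (B ^\<^sub>m Suc m)"
    hence i': "i < n" using B by simp
    have "(\<Sum>k\<in>{0..<n}. (B ^\<^sub>m m) $$ (i,k) * B $$ (k,j)) = 0"
    proof (rule sum.neutral, rule ballI)
      fix k assume "k \<in> {0..<n}"
      thus "(B ^\<^sub>m m) $$ (i,k) * B $$ (k,j) = 0"
        using z1[of k i] z2[of j k] ji i' by (cases "k < i") auto
    qed
    thus "(B ^\<^sub>m Suc m) $$ (i,j) = 0" using ent[of i j] ji i' by simp
  qed
  moreover have "(B ^\<^sub>m Suc m) $$ (i,i) = B $$ (i,i) ^ Suc m" if i: "i < n" for i
  proof -
    have "(\<Sum>k\<in>{0..<n}. (B ^\<^sub>m m) $$ (i,k) * B $$ (k,i)) = (B ^\<^sub>m m) $$ (i,i) * B $$ (i,i)"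
    proof -
      have "(\<Sum>k\<in>{0..<n}. (B ^\<^sub>m m) $$ (i,k) * B $$ (k,i)) = (B ^\<^sub>m m) $$ (i,i) * B $$ (i,i)
         + (\<Sum>k\<in>{0..<n}-{i}. (B ^\<^sub>m m) $$ (i,k) * B $$ (k,i))"
        by (rule sum.remove) (use i in auto)
      also have "(\<Sum>k\<in>{0..<n}-{i}. (B ^\<^sub>m m) $$ (i,k) * B $$ (k,i)) = 0"
      proof (rule sum.neutral, rule ballI)
        fix k assume "k \<in> {0..<n}-{i}"
        thus "(B ^\<^sub>m m) $$ (i,k) * B $$ (k,i) = 0"
          using z1[of k i] z2[of i k] i by (cases "k < i") auto
      qed
      finally show ?thesis by simp
    qed
    thus ?thesis using ent[OF i i] dg i by (simp add: mult.commute)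
  qed
  ultimately show ?case by blast
qed

lemma poly_prod_lin: fixes x :: "'a::comm_ring_1" shows "poly (\<Prod>e\<leftarrow>es. [:- e, 1:]) x = (\<Prod>e\<leftarrow>es. (x - e))"
proof (induction es)
  case (Cons a es)
  have "poly [:- a, 1:] x = x - a" by (simp add: algebra_simps)
  thus ?case using Cons by (simp only: list.map prod_list.Cons poly_mult)
qed simp

lemma trace_pow_roots:
  fixes A :: "real^'n::finite^'n" and es :: "real list"
  assumes cp: "\<And>x. det (mat x - A) = (\<Prod>e\<leftarrow>es. (x - e))"
  shows "trace (matpow A m) = (\<Sum>e\<leftarrow>es. e ^ m)"
proof -
  let ?n = "CARD('n)"
  obtain e :: "nat \<Rightarrow> 'n" where e: "bij_betw e {0..<?n} UNIV"
    using ex_bij_betw_nat_finite[of "UNIV::'n set"] by auto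
  have einj: "e i = e j \<longleftrightarrow> i = j" if "i < ?n" "j < ?n" for i j
    using that e unfolding bij_betw_def inj_on_def by auto
  define A' where "A' = toJ e A"
  have A': "A' \<in> carrier_mat ?n ?n" by (simp add: A'_def)
  have "poly (char_poly A') x = poly (\<Prod>e\<leftarrow>es. [:- e, 1:]) x" for x
  proof -
    have "- char_matrix A' x = toJ e (mat x - A)"
      by (rule eq_matI) (auto simp: A'_def char_matrix_def Finite_Cartesian_Product.mat_def einj)
    hence "poly (char_poly A') x = det (mat x - A)"
      using char_poly_matrix[OF A'] det_toJ[OF e] by simp
    thus ?thesis by (simp add: cp poly_prod_lin)
  qed
  hence cpA: "char_poly A' = (\<Prod>e\<leftarrow>es. [:- e, 1:])"
    by (intro poly_eq_poly_eq_iff[THEN iffD1]) auto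
  obtain B P Q where sd: "schur_decomposition A' es = (B,P,Q)" by (cases "schur_decomposition A' es") auto
  from schur_decomposition[OF A' cpA sd]
  have wit: "similar_mat_wit A' B P Q" and ut: "upper_triangular B" and dg: "diag_mat B = es" by auto
  from wit A' have B: "B \<in> carrier_mat ?n ?n" and P: "P \<in> carrier_mat ?n ?n" and Q: "Q \<in> carrier_mat ?n ?n"
    and QP: "Q * P = 1\<^sub>m ?n" unfolding similar_mat_wit_def Let_def by auto
  have Bm: "B ^\<^sub>m m \<in> carrier_mat ?n ?n" using B by simp
  have "trace (matpow A m) = (\<Sum>i<?n. matpow A m $ e i $ e i)"
    unfolding trace_def by (rule sum_transfer[OF e, symmetric])
  also have "\<dots> = mtr (toJ e (matpow A m))" by (simp add: mtr_def)
  also have "\<dots> = mtr (A' ^\<^sub>m m)" by (simp add: toJ_pow[OF e] A'_def)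
  also have "A' ^\<^sub>m m = P * B ^\<^sub>m m * Q" by (rule similar_mat_wit_pow_id[OF wit])
  also have "mtr \<dots> = mtr (Q * (P * B ^\<^sub>m m))"
    by (rule mtr_comm[of _ ?n ?n]) (use P Bm Q in auto)
  also have "Q * (P * B ^\<^sub>m m) = (Q * P) * B ^\<^sub>m m"
    by (rule assoc_mult_mat[symmetric]) (use P Bm Q in auto)
  also have "\<dots> = B ^\<^sub>m m" using QP Bm by (simp add: left_mult_one_mat)
  also have "mtr (B ^\<^sub>m m) = (\<Sum>i<?n. B $$ (i,i) ^ m)"
    using upper_pow[OF B ut, of m] Bm B by (simp add: mtr_def)
  also have "\<dots> = (\<Sum>e\<leftarrow>es. e ^ m)"
    unfolding dg[symmetric] diag_mat_def using B
    by (simp add: interv_sum_list_conv_sum_set_nat lessThan_atLeast0 comp_def)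
  finally show ?thesis .
qed

lemma analytic_part:
  fixes g :: "nat \<Rightarrow> real" and L :: "nat set" and \<tau> :: "nat \<Rightarrow> real"
  assumes fin: "finite L" "L \<noteq> {}" and g: "\<And>l. l\<in>L \<Longrightarrow> -1 < g l \<and> g l < 1"
  and tau: "\<And>t. t \<ge> 1 \<Longrightarrow> \<tau> t = 1 / (1 + (1 / real t) * (\<Sum>l\<in>L. (1 - g l ^ (2 * t)) / (1 - (g l)\<^sup>2)))"
  shows "\<forall>t\<ge>1. (let S = (\<Sum>l\<in>L. 1 / (1 - (g l)\<^sup>2)); \<Gamma> = Max ((\<lambda>l. \<bar>g l\<bar>) ` L)
            in 1 - S / real t \<le> \<tau> t \<and> \<tau> t \<le> 1 - S / real t + \<Gamma> ^ (2 * t) * (S / real t) + (S / real t)\<^sup>2)"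
    and "(\<lambda>t. real t * (1 - \<tau> t)) \<longlonglongrightarrow> (\<Sum>l\<in>L. 1 / (1 - (g l)\<^sup>2))"
proof -
  define S where "S = (\<Sum>l\<in>L. 1 / (1 - (g l)\<^sup>2))"
  define \<Gamma> where "\<Gamma> = Max ((\<lambda>l. \<bar>g l\<bar>) ` L)"
  define E where "E t = (\<Sum>l\<in>L. (1 - g l ^ (2 * t)) / (1 - (g l)\<^sup>2))" for t
  have den: "0 < 1 - (g l)\<^sup>2" if "l \<in> L" for l
  proof -
    have "\<bar>g l\<bar> < 1" using g[OF that] by auto
    hence "\<bar>g l\<bar>\<^sup>2 < 1" by (simp add: abs_square_less_1)
    thus ?thesis by simp
  qed
  have Gam: "\<bar>g l\<bar> \<le> \<Gamma>" if "l \<in> L" for l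
    unfolding \<Gamma>_def using fin that by (intro Max_ge) auto
  have Gam0: "0 \<le> \<Gamma>" using Gam fin(2) by force
  have pw: "g l ^ (2 * t) = \<bar>g l\<bar> ^ (2 * t)" for l t
    by (simp add: power_even_abs)
  have E_le: "E t \<le> S" for t
    unfolding E_def S_def
  proof (rule sum_mono)
    fix l assume l: "l \<in> L"
    have "0 \<le> g l ^ (2 * t)" by (simp add: pw)
    thus "(1 - g l ^ (2 * t)) / (1 - (g l)\<^sup>2) \<le> 1 / (1 - (g l)\<^sup>2)"
      using den[OF l] by (intro divide_right_mono) auto
  qed
  have E_ge: "(1 - \<Gamma> ^ (2 * t)) * S \<le> E t" for t
    unfolding E_def S_def sum_distrib_left
  proof (rule sum_mono)
    fix l assume l: "l \<in> L"
    have "\<bar>g l\<bar> ^ (2 * t) \<le> \<Gamma> ^ (2 * t)" using Gam[OF l] by (intro power_mono) auto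
    hence "1 - \<Gamma> ^ (2 * t) \<le> 1 - g l ^ (2 * t)" by (simp add: pw)
    thus "(1 - \<Gamma> ^ (2 * t)) * (1 / (1 - (g l)\<^sup>2)) \<le> (1 - g l ^ (2 * t)) / (1 - (g l)\<^sup>2)"
      using den[OF l] by (simp add: divide_right_mono)
  qed
  have E_ge0: "0 \<le> E t" for t
    unfolding E_def
  proof (rule sum_nonneg)
    fix l assume l: "l \<in> L"
    have "\<bar>g l\<bar> ^ (2 * t) \<le> 1 ^ (2 * t)" using g[OF l] by (intro power_mono) auto
    hence "g l ^ (2 * t) \<le> 1" by (simp add: pw)
    thus "0 \<le> (1 - g l ^ (2 * t)) / (1 - (g l)\<^sup>2)" using den[OF l] by simp
  qed
  show "\<forall>t\<ge>1. (let S = (\<Sum>l\<in>L. 1 / (1 - (g l)\<^sup>2)); \<Gamma> = Max ((\<lambda>l. \<bar>g l\<bar>) ` L)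
            in 1 - S / real t \<le> \<tau> t \<and> \<tau> t \<le> 1 - S / real t + \<Gamma> ^ (2 * t) * (S / real t) + (S / real t)\<^sup>2)"
  proof (intro allI impI)
    fix t :: nat assume t: "t \<ge> 1"
    define D where "D = E t / real t"
    define s where "s = S / real t"
    have tt: "real t > 0" using t by simp
    have D0: "0 \<le> D" using E_ge0 tt by (simp add: D_def)
    have Ds: "D \<le> s" using E_le tt by (simp add: D_def s_def divide_right_mono)
    have Dg: "(1 - \<Gamma> ^ (2 * t)) * s \<le> D" using E_ge[of t] tt
      by (simp add: D_def s_def divide_right_mono)
    have tauD: "\<tau> t = 1 / (1 + D)" using tau[OF t] by (simp add: D_def E_def)
    have l1: "1 - D \<le> 1 / (1 + D)" using D0 by (simp add: field_simps)
    have u1: "1 / (1 + D) \<le> 1 - D + D\<^sup>2"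
    proof -
      have "1 \<le> (1 - D + D\<^sup>2) * (1 + D)" using D0 by (simp add: algebra_simps power2_eq_square power3_eq_cube[symmetric])
      thus ?thesis using D0 by (simp add: field_simps)
    qed
    have "D\<^sup>2 \<le> s\<^sup>2" using D0 Ds by (intro power_mono) auto
    hence "\<tau> t \<le> 1 - s + \<Gamma> ^ (2 * t) * s + s\<^sup>2" using u1 Dg tauD by (simp add: algebra_simps)
    moreover have "1 - s \<le> \<tau> t" using l1 Ds tauD by simp
    ultimately show "let S = (\<Sum>l\<in>L. 1 / (1 - (g l)\<^sup>2)); \<Gamma> = Max ((\<lambda>l. \<bar>g l\<bar>) ` L)
            in 1 - S / real t \<le> \<tau> t \<and> \<tau> t \<le> 1 - S / real t + \<Gamma> ^ (2 * t) * (S / real t) + (S / real t)\<^sup>2"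
      by (simp add: S_def[symmetric] \<Gamma>_def[symmetric] s_def Let_def)
  qed
  have Elim: "E \<longlonglongrightarrow> S"
    unfolding E_def S_def
  proof (rule tendsto_sum)
    fix l assume l: "l \<in> L"
    have "(\<lambda>t. ((g l)\<^sup>2) ^ t) \<longlonglongrightarrow> 0"
      using den[OF l] by (intro LIMSEQ_power_zero) auto
    hence "(\<lambda>t. g l ^ (2 * t)) \<longlonglongrightarrow> 0" by (simp add: power_mult)
    thus "(\<lambda>t. (1 - g l ^ (2 * t)) / (1 - (g l)\<^sup>2)) \<longlonglongrightarrow> 1 / (1 - (g l)\<^sup>2)"
      using den[OF l] by (auto intro!: tendsto_eq_intros)
  qed
  have inv: "(\<lambda>t. 1 / real t) \<longlonglongrightarrow> 0" by (rule lim_1_over_n)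
  have "(\<lambda>t. E t / (1 + (1 / real t) * E t)) \<longlonglongrightarrow> S / (1 + 0 * S)"
    by (intro tendsto_intros Elim inv) simp
  hence lim: "(\<lambda>t. E t / (1 + (1 / real t) * E t)) \<longlonglongrightarrow> S" by simp
  have ev: "\<forall>\<^sub>F t in sequentially. E t / (1 + (1 / real t) * E t) = real t * (1 - \<tau> t)"
  proof (rule eventually_sequentiallyI[of 1])
    fix t :: nat assume t: "t \<ge> 1"
    have tt: "real t > 0" using t by simp
    have p: "1 + (1 / real t) * E t > 0" using E_ge0[of t] tt by (simp add: add_pos_nonneg)
    show "E t / (1 + (1 / real t) * E t) = real t * (1 - \<tau> t)"
    proof -
      have "\<tau> t = 1 / (1 + (1 / real t) * E t)" using tau[OF t] by (simp add: E_def)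
      thus ?thesis using p tt by (simp add: field_simps)
    qed
  qed
  show "(\<lambda>t. real t * (1 - \<tau> t)) \<longlonglongrightarrow> (\<Sum>l\<in>L. 1 / (1 - (g l)\<^sup>2))"
    using Lim_transform_eventually[OF lim ev] by (simp add: S_def)
qed

lemma matpow_Suc: "matpow A (Suc m) = A ** matpow A m"
  by (simp add: matpow_def)

lemma matpow_0: "matpow A 0 = mat 1"
  by (simp add: matpow_def)

lemma matpow_add: "matpow A (a + b) = matpow A a ** matpow A b"
  by (induction a) (simp_all add: matpow_0 matpow_Suc matrix_mul_assoc)

lemma matpow_transpose: "transpose A = A \<Longrightarrow> transpose (matpow A m) = matpow A m"
  by (induction m) (simp_all add: matpow_0 matpow_Suc matrix_transpose_mul matpow_Suc'[symmetric])

lemma frob_trace: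
  assumes "transpose A = A"
  shows "(\<Sum>i\<in>UNIV. \<Sum>j\<in>UNIV. (matpow A m $ i $ j)\<^sup>2) = trace (matpow A (2 * m))"
proof -
  have "matpow A (2 * m) = matpow A m ** transpose (matpow A m)"
    using matpow_add[of A m m] matpow_transpose[OF assms] by (simp add: mult_2)
  thus ?thesis
    by (simp add: trace_def matrix_matrix_mult_def transpose_def power2_eq_square)
qed

lemma norm_sq_vec: "(norm (x::real^'n))\<^sup>2 = (\<Sum>i\<in>UNIV. (x$i)\<^sup>2)"
  unfolding power2_norm_eq_inner by (simp add: inner_vec_def power2_eq_square)

lemma alg_aux: assumes r: "(r::real) > 0" shows "(r/(r+1))*(th + (1/r)*a) + (1/(r+1))*x - th = (1/(r+1))*(a + (x - th))"
proof -
  have r1: "r + 1 \<noteq> 0" using r by simp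
  have e1: "(r/(r+1))*((1/r)*a) = a/(r+1)" using r by simp
  have "(r/(r+1))*(th + (1/r)*a) = (r/(r+1))*th + a/(r+1)" using e1 by (simp add: distrib_left)
  moreover have "(r/(r+1))*th + a/(r+1) + (1/(r+1))*x - th = (1/(r+1))*(a + (x - th))"
    using r1 by (simp add: divide_simps) (simp add: algebra_simps)
  ultimately show ?thesis by simp
qed

lemma theta_hat_rec:
  "t \<ge> 1 \<Longrightarrow> theta_hat A X (Suc t) \<omega> = (real t / real (Suc t)) *\<^sub>R (A *v theta_hat A X t \<omega>) + (1 / real (Suc t)) *\<^sub>R Xvec X (Suc t) \<omega>"
  by (cases t) auto

lemma theta_hat_repr:
  fixes A :: "real^'n^'n"
  assumes A1: "A *v ones = ones" and t: "t \<ge> 1"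
  shows "theta_hat A X t \<omega> - \<theta> *\<^sub>R ones = (1 / real t) *\<^sub>R (\<Sum>k\<in>{1..t}. matpow A (t - k) *v (Xvec X k \<omega> - \<theta> *\<^sub>R ones))"
  using t
proof (induction t rule: nat_induct_at_least)
  case base thus ?case by (simp add: matpow_0)
next
  case (Suc t)
  define v where "v k = Xvec X k \<omega> - \<theta> *\<^sub>R ones" for k
  define St where "St = (\<Sum>k\<in>{1..t}. matpow A (t - k) *v v k)"
  have IH: "theta_hat A X t \<omega> = \<theta> *\<^sub>R ones + (1 / real t) *\<^sub>R St"
    using Suc.IH by (simp add: St_def v_def algebra_simps)
  have "(\<Sum>k\<in>{1..t}. matpow A (Suc t - k) *v v k) = (\<Sum>k\<in>{1..t}. A *v (matpow A (t - k) *v v k))"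
  proof (rule sum.cong[OF refl])
    fix k assume "k \<in> {1..t}"
    hence "Suc t - k = Suc (t - k)" by auto
    thus "matpow A (Suc t - k) *v v k = A *v (matpow A (t - k) *v v k)"
      by (simp add: matpow_Suc matrix_vector_mul_assoc)
  qed
  also have "\<dots> = A *v St"
    unfolding St_def by (simp add: linear_sum[OF matrix_vector_mul_linear] comp_def)
  finally have S1: "(\<Sum>k\<in>{1..Suc t}. matpow A (Suc t - k) *v v k) = A *v St + v (Suc t)"
    by (simp add: matpow_0)
  have AS: "A *v theta_hat A X t \<omega> = \<theta> *\<^sub>R ones + (1 / real t) *\<^sub>R (A *v St)"
    unfolding IH by (simp add: matrix_vector_right_distrib matrix_vector_mult_scaleR A1)
  have tt: "real t > 0" using Suc.hyps by simp
  have "theta_hat A X (Suc t) \<omega> - \<theta> *\<^sub>R ones = (1 / real (Suc t)) *\<^sub>R (A *v St + v (Suc t))"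
  proof (subst Finite_Cartesian_Product.vec_eq_iff, rule allI)
    fix i
    define a where "a = (A *v St) $ i"
    define x where "x = Xvec X (Suc t) \<omega> $ i"
    have alg: "(real t / real (Suc t)) * (\<theta> + (1 / real t) * a) + (1 / real (Suc t)) * x - \<theta>
        = (1 / real (Suc t)) * (a + (x - \<theta>))"
      using alg_aux[OF tt, of \<theta> a x] by (simp add: add.commute)
    show "(theta_hat A X (Suc t) \<omega> - \<theta> *\<^sub>R ones) $ i = ((1 / real (Suc t)) *\<^sub>R (A *v St + v (Suc t))) $ i"
      unfolding theta_hat_rec[OF Suc.hyps] AS using alg
      by (simp add: v_def ones_def a_def x_def del: of_nat_Suc)
  qed
  thus ?case using S1 by (simp add: v_def)
qed

lemma theta_hat_comp:
  fixes A :: "real^'n^'n"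
  assumes A1: "A *v ones = ones" and t: "t \<ge> 1"
  shows "(theta_hat A X t \<omega> - \<theta> *\<^sub>R ones) $ i =
    (\<Sum>p\<in>{1..t}\<times>UNIV. (1 / real t * matpow A (t - fst p) $ i $ snd p) * (X (fst p) (snd p) \<omega> - \<theta>))"
proof -
  have "(theta_hat A X t \<omega> - \<theta> *\<^sub>R ones) $ i =
      1 / real t * (\<Sum>k\<in>{1..t}. \<Sum>j\<in>UNIV. matpow A (t - k) $ i $ j * (X k j \<omega> - \<theta>))"
    unfolding theta_hat_repr[OF A1 t]
    by (simp add: matrix_vector_mult_def Xvec_def ones_def)
  also have "\<dots> = (\<Sum>k\<in>{1..t}. \<Sum>j\<in>UNIV. (1 / real t * matpow A (t - k) $ i $ j) * (X k j \<omega> - \<theta>))"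
    by (simp add: sum_distrib_left mult.assoc)
  also have "\<dots> = (\<Sum>p\<in>{1..t}\<times>UNIV. (1 / real t * matpow A (t - fst p) $ i $ snd p) * (X (fst p) (snd p) \<omega> - \<theta>))"
    by (simp add: sum.cartesian_product split_def)
  finally show ?thesis .
qed

lemma grand_mean_comp:
  assumes t: "t \<ge> 1"
  shows "grand_mean X t \<omega> - \<theta> =
    (\<Sum>p\<in>{1..t}\<times>(UNIV::'n::finite set). (1 / (real CARD('n) * real t)) * (X (fst p) (snd p) \<omega> - \<theta>))"
proof -
  have tt: "real t > 0" using t by simp
  have "(\<Sum>p\<in>{1..t}\<times>(UNIV::'n set). (1 / (real CARD('n) * real t)) * (X (fst p) (snd p) \<omega> - \<theta>))
     = (1 / (real CARD('n) * real t)) * (\<Sum>p\<in>{1..t}\<times>(UNIV::'n set). X (fst p) (snd p) \<omega>) - \<theta>"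
  proof -
    have "(\<Sum>p\<in>{1..t}\<times>(UNIV::'n set). (1 / (real CARD('n) * real t)) * (X (fst p) (snd p) \<omega> - \<theta>))
      = (1 / (real CARD('n) * real t)) * (\<Sum>p\<in>{1..t}\<times>(UNIV::'n set). X (fst p) (snd p) \<omega>)
        - (1 / (real CARD('n) * real t)) * \<theta> * real (card ({1..t}\<times>(UNIV::'n set)))"
      by (simp add: right_diff_distrib sum_subtractf sum_distrib_left)
    also have "real (card ({1..t}\<times>(UNIV::'n set))) = real t * real CARD('n)"
      by (simp add: card_cartesian_product)
    finally show ?thesis using tt by simp
  qed
  also have "(\<Sum>p\<in>{1..t}\<times>(UNIV::'n set). X (fst p) (snd p) \<omega>) = (\<Sum>i\<in>UNIV. \<Sum>k\<in>{1..t}. X k i \<omega>)"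
    by (subst sum.swap) (simp add: sum.cartesian_product split_def)
  finally show ?thesis by (simp add: grand_mean_def)
qed


lemma sq_sum_indep:
  fixes M :: "'a measure" and Z :: "'b \<Rightarrow> 'a \<Rightarrow> real" and c :: "'b \<Rightarrow> real"
  assumes fin: "finite J" and int: "\<And>a b. a\<in>J \<Longrightarrow> b\<in>J \<Longrightarrow> integrable M (\<lambda>\<omega>. Z a \<omega> * Z b \<omega>)"
    and E: "\<And>a b. a\<in>J \<Longrightarrow> b\<in>J \<Longrightarrow> (\<integral>\<omega>. Z a \<omega> * Z b \<omega> \<partial>M) = (if a = b then s else 0)"
  shows "integrable M (\<lambda>\<omega>. (\<Sum>a\<in>J. c a * Z a \<omega>)\<^sup>2)"
    and "(\<integral>\<omega>. (\<Sum>a\<in>J. c a * Z a \<omega>)\<^sup>2 \<partial>M) = s * (\<Sum>a\<in>J. (c a)\<^sup>2)"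
proof -
  have eq: "(\<lambda>\<omega>. (\<Sum>a\<in>J. c a * Z a \<omega>)\<^sup>2) = (\<lambda>\<omega>. \<Sum>a\<in>J. \<Sum>b\<in>J. (c a * c b) * (Z a \<omega> * Z b \<omega>))"
    by (auto simp: power2_eq_square sum_product mult_ac)
  show "integrable M (\<lambda>\<omega>. (\<Sum>a\<in>J. c a * Z a \<omega>)\<^sup>2)"
    unfolding eq by (rule Bochner_Integration.integrable_sum, rule Bochner_Integration.integrable_sum,
        rule integrable_mult_right, rule int)
  have i1: "integrable M (\<lambda>\<omega>. \<Sum>b\<in>J. (c a * c b) * (Z a \<omega> * Z b \<omega>))" if a: "a \<in> J" for a
    by (rule Bochner_Integration.integrable_sum, rule integrable_mult_right, rule int[OF a])
  have "(\<integral>\<omega>. (\<Sum>a\<in>J. c a * Z a \<omega>)\<^sup>2 \<partial>M) = (\<Sum>a\<in>J. \<integral>\<omega>. (\<Sum>b\<in>J. (c a * c b) * (Z a \<omega> * Z b \<omega>)) \<partial>M)"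
    unfolding eq by (rule Bochner_Integration.integral_sum, rule i1)
  also have "\<dots> = (\<Sum>a\<in>J. \<Sum>b\<in>J. \<integral>\<omega>. (c a * c b) * (Z a \<omega> * Z b \<omega>) \<partial>M)"
    by (rule sum.cong[OF refl], rule Bochner_Integration.integral_sum, rule integrable_mult_right, rule int)
  also have "\<dots> = (\<Sum>a\<in>J. \<Sum>b\<in>J. (c a * c b) * (\<integral>\<omega>. Z a \<omega> * Z b \<omega> \<partial>M))"
    by simp
  also have "\<dots> = (\<Sum>a\<in>J. (c a * c a) * s)"
    by (rule sum.cong[OF refl]) (simp add: E fin if_distrib cong: if_cong)
  finally show "(\<integral>\<omega>. (\<Sum>a\<in>J. c a * Z a \<omega>)\<^sup>2 \<partial>M) = s * (\<Sum>a\<in>J. (c a)\<^sup>2)"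
    by (simp add: power2_eq_square sum_distrib_left mult_ac)
qed

lemma stoch_ones: "stochastic_matrix A \<Longrightarrow> A *v ones = ones"
  by (simp add: stochastic_matrix_def matrix_vector_mult_def ones_def Finite_Cartesian_Product.vec_eq_iff)

lemma reindex_rev: fixes t :: nat shows "(\<Sum>k\<in>{1..t}. f (t - k)) = (\<Sum>s<t. (f s :: real))"
  by (rule sum.reindex_bij_witness[of _ "\<lambda>s. t - s" "\<lambda>k. t - k"]) auto


lemma ratio_aux:
  fixes s2 r g :: real
  assumes "s2 > 0" "r > 0" "r + g > 0"
  shows "(s2 / r) / (s2 * ((1 / r\<^sup>2) * (r + g))) = 1 / (1 + (1 / r) * g)"
proof -
  have a1: "(s2 / r) / (s2 * ((1 / r\<^sup>2) * (r + g))) = 1 / (r * ((1 / r\<^sup>2) * (r + g)))"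
    using assms by simp
  have a2: "r * ((1 / r\<^sup>2) * (r + g)) = 1 + (1 / r) * g"
    using assms by (simp add: field_simps power2_eq_square)
  show ?thesis unfolding a1 a2 ..
qed

theorem theorem2:
  fixes M :: "'a measure"
    and X0 :: "'a \<Rightarrow> real"
    and X :: "nat \<Rightarrow> 'n::finite \<Rightarrow> 'a \<Rightarrow> real"
    and A :: "real^'n^'n"
    and \<theta> \<sigma> :: real
    and \<gamma> :: "nat \<Rightarrow> real"
  assumes "prob_space M"
    and "X0 \<in> borel_measurable M"
    and "integrable M (\<lambda>x. (X0 x)\<^sup>2)"
    and "\<theta> = (\<integral>x. X0 x \<partial>M)"
    and "\<sigma>\<^sup>2 = (\<integral>x. (X0 x - \<theta>)\<^sup>2 \<partial>M)"
    and "\<sigma>\<^sup>2 > 0"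
    and "CARD('n) \<ge> 2"
    and "\<And>t i. t \<ge> 1 \<Longrightarrow> X t i \<in> borel_measurable M"
    and "\<And>t i. t \<ge> 1 \<Longrightarrow> distr M borel (X t i) = distr M borel X0"
    and "prob_space.indep_vars M (\<lambda>_. borel) (\<lambda>(t, i). X t i) ({1..} \<times> UNIV)"
    and "stochastic_matrix A"
    and "irreducible_matrix A"
    and "aperiodic_matrix A"
    and "transpose A = A"
    and "\<And>x. det (mat x - A) = (x - 1) * (\<Prod>l\<in>{2..CARD('n)}. (x - \<gamma> l))"
    and "\<And>l. 2 \<le> l \<Longrightarrow> l < CARD('n) \<Longrightarrow> \<gamma> (Suc l) \<le> \<gamma> l"
    and "\<And>l. 2 \<le> l \<Longrightarrow> l \<le> CARD('n) \<Longrightarrow> -1 < \<gamma> l \<and> \<gamma> l < 1"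
  shows "(\<forall>t\<ge>1. perf_ratio M A X \<theta> t =
           1 / (1 + (1 / real t) * (\<Sum>l=2..CARD('n). (1 - \<gamma> l ^ (2 * t)) / (1 - (\<gamma> l)\<^sup>2))))
    \<and> (\<forall>t\<ge>1.
           (let S = (\<Sum>l=2..CARD('n). 1 / (1 - (\<gamma> l)\<^sup>2));
                \<Gamma> = Max ((\<lambda>l. \<bar>\<gamma> l\<bar>) ` {2..CARD('n)})
            in 1 - S / real t \<le> perf_ratio M A X \<theta> t \<and>
               perf_ratio M A X \<theta> t \<le> 1 - S / real t + \<Gamma> ^ (2 * t) * (S / real t) + (S / real t)\<^sup>2))
    \<and> ((\<lambda>t. real t * (1 - perf_ratio M A X \<theta> t))
           \<longlonglongrightarrow> (\<Sum>l=2..CARD('n). 1 / (1 - (\<gamma> l)\<^sup>2)))"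
proof -
  interpret P: prob_space M by fact
  note Xm = assms(8) and dist = assms(9) and indep = assms(10)
  let ?N = "CARD('n)"
  let ?I = "{1..} \<times> (UNIV::'n set)"
  define Z where "Z p = (\<lambda>\<omega>. X (fst p) (snd p) \<omega> - \<theta>)" for p
  have X0m: "X0 \<in> borel_measurable M" by fact
  have X0int: "integrable M X0" by (rule P.square_integrable_imp_integrable[OF assms(2) assms(3)])
  have X0c: "integrable M (\<lambda>x. X0 x - \<theta>)" using X0int by simp
  have X0c2: "integrable M (\<lambda>x. (X0 x - \<theta>) * (X0 x - \<theta>))"
  proof -
    have "(\<lambda>x. (X0 x - \<theta>) * (X0 x - \<theta>)) = (\<lambda>x. (X0 x)\<^sup>2 + \<theta>\<^sup>2 - 2 * \<theta> * X0 x)"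
      by (auto simp: power2_eq_square algebra_simps)
    thus ?thesis using assms(3) X0int by simp
  qed
  have tr_int: "integrable M (\<lambda>\<omega>. g (X t i \<omega>)) \<longleftrightarrow> integrable M (\<lambda>\<omega>. g (X0 \<omega>))"
    if t: "t \<ge> 1" and g: "g \<in> borel_measurable borel" for t i and g :: "real \<Rightarrow> real"
  proof -
    have "integrable M (\<lambda>\<omega>. g (X t i \<omega>)) \<longleftrightarrow> integrable (distr M borel (X t i)) g"
      using Xm[OF t] g by (simp add: integrable_distr_eq)
    also have "\<dots> \<longleftrightarrow> integrable (distr M borel X0) g" using dist[OF t] by simp
    also have "\<dots> \<longleftrightarrow> integrable M (\<lambda>\<omega>. g (X0 \<omega>))" using X0m g by (simp add: integrable_distr_eq)
    finally show ?thesis .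
  qed
  have tr_E: "(\<integral>\<omega>. g (X t i \<omega>) \<partial>M) = (\<integral>\<omega>. g (X0 \<omega>) \<partial>M)"
    if t: "t \<ge> 1" and g: "g \<in> borel_measurable borel" for t i and g :: "real \<Rightarrow> real"
  proof -
    have "(\<integral>\<omega>. g (X t i \<omega>) \<partial>M) = integral\<^sup>L (distr M borel (X t i)) g"
      using Xm[OF t] g by (simp add: integral_distr)
    also have "\<dots> = integral\<^sup>L (distr M borel X0) g" using dist[OF t] by simp
    also have "\<dots> = (\<integral>\<omega>. g (X0 \<omega>) \<partial>M)" using X0m g by (simp add: integral_distr)
    finally show ?thesis .
  qed
  have gm1: "(\<lambda>x::real. x - \<theta>) \<in> borel_measurable borel" by measurable
  have gm2: "(\<lambda>x::real. (x - \<theta>) * (x - \<theta>)) \<in> borel_measurable borel" by measurable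
  have intZ: "integrable M (Z p)" if p: "p \<in> ?I" for p
    using tr_int[OF _ gm1, of "fst p" "snd p"] p X0c by (auto simp: Z_def)
  have EZ: "(\<integral>\<omega>. Z p \<omega> \<partial>M) = 0" if p: "p \<in> ?I" for p
  proof -
    have "(\<integral>\<omega>. Z p \<omega> \<partial>M) = (\<integral>\<omega>. X0 \<omega> - \<theta> \<partial>M)"
      using tr_E[OF _ gm1, of "fst p" "snd p"] p by (auto simp: Z_def)
    also have "\<dots> = 0" using X0int by (simp add: assms(4) P.prob_space)
    finally show ?thesis .
  qed
  have intZZ: "integrable M (\<lambda>\<omega>. Z p \<omega> * Z p \<omega>)" if p: "p \<in> ?I" for p
    using tr_int[OF _ gm2, of "fst p" "snd p"] p X0c2 by (auto simp: Z_def)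
  have EZZ: "(\<integral>\<omega>. Z p \<omega> * Z p \<omega> \<partial>M) = \<sigma>\<^sup>2" if p: "p \<in> ?I" for p
  proof -
    have "(\<integral>\<omega>. Z p \<omega> * Z p \<omega> \<partial>M) = (\<integral>\<omega>. (X0 \<omega> - \<theta>) * (X0 \<omega> - \<theta>) \<partial>M)"
      using tr_E[OF _ gm2, of "fst p" "snd p"] p by (auto simp: Z_def)
    also have "\<dots> = \<sigma>\<^sup>2" using assms(5) by (simp add: power2_eq_square)
    finally show ?thesis .
  qed
  have indZ: "P.indep_var borel (Z p) borel (Z q)" if pq: "p \<in> ?I" "q \<in> ?I" "p \<noteq> q" for p q
  proof -
    from P.indep_var_restrict[OF indep, of "{p}" "{q}"] pq
    have i1: "P.indep_var (PiM {p} (\<lambda>_. borel)) (\<lambda>\<omega>. restrict (\<lambda>i. (\<lambda>(t, i). X t i) i \<omega>) {p})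
                      (PiM {q} (\<lambda>_. borel)) (\<lambda>\<omega>. restrict (\<lambda>i. (\<lambda>(t, i). X t i) i \<omega>) {q})"
      by auto
    have m1: "(\<lambda>f. f p - \<theta>) \<in> borel_measurable (PiM {p} (\<lambda>_. borel :: real measure))"
      by (intro borel_measurable_diff measurable_component_singleton) auto
    have m2: "(\<lambda>f. f q - \<theta>) \<in> borel_measurable (PiM {q} (\<lambda>_. borel :: real measure))"
      by (intro borel_measurable_diff measurable_component_singleton) auto
    from P.indep_var_compose[OF i1 m1 m2] show ?thesis
      by (simp add: comp_def Z_def split_def)
  qed
  have cross: "integrable M (\<lambda>\<omega>. Z p \<omega> * Z q \<omega>) \<and> (\<integral>\<omega>. Z p \<omega> * Z q \<omega> \<partial>M) = (if p = q then \<sigma>\<^sup>2 else 0)"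
    if pq: "p \<in> ?I" "q \<in> ?I" for p q
  proof (cases "p = q")
    case True thus ?thesis using intZZ EZZ pq by simp
  next
    case False
    show ?thesis using P.indep_var_integrable[OF indZ[OF pq False] intZ[OF pq(1)] intZ[OF pq(2)]]
      P.indep_var_lebesgue_integral[OF indZ[OF pq False] intZ[OF pq(1)] intZ[OF pq(2)]]
      EZ[OF pq(1)] False by simp
  qed
  have A1: "A *v ones = ones" by (rule stoch_ones[OF assms(11)])
  define es where "es = 1 # map \<gamma> [2..<Suc ?N]"
  have cp: "det (mat x - A) = (\<Prod>e\<leftarrow>es. (x - e))" for x
  proof -
    have "(\<Prod>e\<leftarrow>es. (x - e)) = (x - 1) * (\<Prod>l\<leftarrow>[2..<Suc ?N]. (x - \<gamma> l))"
      by (simp add: es_def comp_def)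
    also have "(\<Prod>l\<leftarrow>[2..<Suc ?N]. (x - \<gamma> l)) = (\<Prod>l\<in>{2..?N}. (x - \<gamma> l))"
      by (subst prod.distinct_set_conv_list[symmetric], simp, simp only: set_upt atLeastLessThanSuc_atLeastAtMost)
    finally show ?thesis using assms(15) by simp
  qed
  have trs: "trace (matpow A (2 * s)) = 1 + (\<Sum>l=2..?N. ((\<gamma> l)\<^sup>2) ^ s)" for s
  proof -
    have "trace (matpow A (2 * s)) = (\<Sum>e\<leftarrow>es. e ^ (2 * s))" by (rule trace_pow_roots[OF cp])
    also have "\<dots> = 1 + (\<Sum>l\<leftarrow>[2..<Suc ?N]. \<gamma> l ^ (2 * s))" by (simp add: es_def comp_def)
    also have "(\<Sum>l\<leftarrow>[2..<Suc ?N]. \<gamma> l ^ (2 * s)) = (\<Sum>l=2..?N. \<gamma> l ^ (2 * s))"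
      by (subst sum.distinct_set_conv_list[symmetric], simp, simp only: set_upt atLeastLessThanSuc_atLeastAtMost)
    finally show ?thesis by (simp add: power_mult)
  qed
  have gam1: "(\<gamma> l)\<^sup>2 \<noteq> 1" if "l \<in> {2..?N}" for l
  proof -
    have "\<bar>\<gamma> l\<bar> < 1" using assms(17)[of l] that by auto
    hence "\<bar>\<gamma> l\<bar>\<^sup>2 < 1" by (simp add: abs_square_less_1)
    thus ?thesis by simp
  qed
  define G where "G t = (\<Sum>l=2..?N. (1 - \<gamma> l ^ (2 * t)) / (1 - (\<gamma> l)\<^sup>2))" for t
  have G0: "0 \<le> G t" for t
    unfolding G_def
  proof (rule sum_nonneg)
    fix l assume l: "l \<in> {2..?N}"
    have "\<bar>\<gamma> l\<bar> < 1" using assms(17)[of l] l by auto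
    hence a: "\<bar>\<gamma> l\<bar>\<^sup>2 < 1" by (simp add: abs_square_less_1)
    have "\<bar>\<gamma> l\<bar> ^ (2 * t) \<le> 1 ^ (2 * t)" using \<open>\<bar>\<gamma> l\<bar> < 1\<close> by (intro power_mono) auto
    hence "\<gamma> l ^ (2 * t) \<le> 1" by (simp add: power_even_abs)
    thus "0 \<le> (1 - \<gamma> l ^ (2 * t)) / (1 - (\<gamma> l)\<^sup>2)" using a by simp
  qed
  have trsum: "(\<Sum>s<t. trace (matpow A (2 * s))) = real t + G t" for t
  proof -
    have "(\<Sum>s<t. trace (matpow A (2 * s))) = real t + (\<Sum>l=2..?N. \<Sum>s<t. ((\<gamma> l)\<^sup>2) ^ s)"
      by (simp add: trs sum.distrib sum.swap[of _ "{..<t}"])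
    also have "(\<Sum>l=2..?N. \<Sum>s<t. ((\<gamma> l)\<^sup>2) ^ s) = G t"
      unfolding G_def
    proof (rule sum.cong[OF refl])
      fix l assume l: "l \<in> {2..?N}"
      show "(\<Sum>s<t. ((\<gamma> l)\<^sup>2) ^ s) = (1 - \<gamma> l ^ (2 * t)) / (1 - (\<gamma> l)\<^sup>2)"
        using gam1[OF l] by (simp add: sum_gp_strict power_mult)
    qed
    finally show ?thesis .
  qed
  have key: "perf_ratio M A X \<theta> t = 1 / (1 + (1 / real t) * G t)" if t: "t \<ge> 1" for t
  proof -
    let ?J = "{1..t} \<times> (UNIV::'n set)"
    have JI: "?J \<subseteq> ?I" by auto
    have finJ: "finite ?J" by simp
    have crossJ: "\<And>p q. p \<in> ?J \<Longrightarrow> q \<in> ?J \<Longrightarrow> integrable M (\<lambda>\<omega>. Z p \<omega> * Z q \<omega>)"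
      "\<And>p q. p \<in> ?J \<Longrightarrow> q \<in> ?J \<Longrightarrow> (\<integral>\<omega>. Z p \<omega> * Z q \<omega> \<partial>M) = (if p = q then \<sigma>\<^sup>2 else 0)"
      using cross JI by blast+
    have tt: "real t > 0" using t by simp
    define c where "c i p = 1 / real t * matpow A (t - fst p) $ i $ snd p" for i p
    have comp: "(theta_hat A X t \<omega> - \<theta> *\<^sub>R ones) $ i = (\<Sum>p\<in>?J. c i p * Z p \<omega>)" for \<omega> i
      unfolding theta_hat_comp[OF A1 t] c_def Z_def by simp
    have den: "(\<integral>\<omega>. (norm (theta_hat A X t \<omega> - \<theta> *\<^sub>R ones))\<^sup>2 \<partial>M) = \<sigma>\<^sup>2 * (\<Sum>i\<in>UNIV. \<Sum>p\<in>?J. (c i p)\<^sup>2)"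
    proof -
      have "(\<integral>\<omega>. (norm (theta_hat A X t \<omega> - \<theta> *\<^sub>R ones))\<^sup>2 \<partial>M) = (\<integral>\<omega>. (\<Sum>i\<in>UNIV. (\<Sum>p\<in>?J. c i p * Z p \<omega>)\<^sup>2) \<partial>M)"
        by (simp only: norm_sq_vec comp)
      also have "\<dots> = (\<Sum>i\<in>UNIV. \<integral>\<omega>. (\<Sum>p\<in>?J. c i p * Z p \<omega>)\<^sup>2 \<partial>M)"
        by (rule Bochner_Integration.integral_sum, rule sq_sum_indep(1)[OF finJ crossJ])
      also have "\<dots> = (\<Sum>i\<in>UNIV. \<sigma>\<^sup>2 * (\<Sum>p\<in>?J. (c i p)\<^sup>2))"
        by (rule sum.cong[OF refl], rule sq_sum_indep(2)[OF finJ crossJ])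
      finally show ?thesis by (simp add: sum_distrib_left)
    qed
    have sumc: "(\<Sum>i\<in>UNIV. \<Sum>p\<in>?J. (c i p)\<^sup>2) = (1 / (real t)\<^sup>2) * (real t + G t)"
    proof -
      have "(\<Sum>i\<in>UNIV. \<Sum>p\<in>?J. (c i p)\<^sup>2) = (\<Sum>i\<in>UNIV. \<Sum>k\<in>{1..t}. \<Sum>j\<in>UNIV. (1 / real t)\<^sup>2 * (matpow A (t - k) $ i $ j)\<^sup>2)"
        by (simp add: c_def sum.cartesian_product split_def power_mult_distrib power_divide)
      also have "\<dots> = (1 / real t)\<^sup>2 * (\<Sum>k\<in>{1..t}. \<Sum>i\<in>UNIV. \<Sum>j\<in>UNIV. (matpow A (t - k) $ i $ j)\<^sup>2)"
        by (subst sum.swap) (simp add: sum_distrib_left)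
      also have "\<dots> = (1 / real t)\<^sup>2 * (\<Sum>k\<in>{1..t}. trace (matpow A (2 * (t - k))))"
        by (simp add: frob_trace[OF assms(14)])
      also have "(\<Sum>k\<in>{1..t}. trace (matpow A (2 * (t - k)))) = (\<Sum>s<t. trace (matpow A (2 * s)))"
        by (rule reindex_rev)
      finally show ?thesis by (simp add: trsum power_one_over)
    qed
    have gmc: "grand_mean X t \<omega> - \<theta> = (\<Sum>p\<in>?J. (1 / (real ?N * real t)) * Z p \<omega>)" for \<omega>
      unfolding grand_mean_comp[OF t] Z_def by simp
    have nones: "(norm (ones::real^'n))\<^sup>2 = real ?N" by (simp add: norm_sq_vec ones_def)
    have num: "(\<integral>\<omega>. (norm ((grand_mean X t \<omega> - \<theta>) *\<^sub>R (ones::real^'n)))\<^sup>2 \<partial>M) = \<sigma>\<^sup>2 / real t"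
    proof -
      have "(\<integral>\<omega>. (norm ((grand_mean X t \<omega> - \<theta>) *\<^sub>R (ones::real^'n)))\<^sup>2 \<partial>M)
          = (\<integral>\<omega>. real ?N * (\<Sum>p\<in>?J. (1 / (real ?N * real t)) * Z p \<omega>)\<^sup>2 \<partial>M)"
        by (simp add: gmc power_mult_distrib nones mult.commute)
      also have "\<dots> = real ?N * (\<sigma>\<^sup>2 * (\<Sum>p\<in>?J. (1 / (real ?N * real t))\<^sup>2))"
        using sq_sum_indep(2)[OF finJ crossJ, of "\<lambda>_. 1 / (real ?N * real t)"] by simp
      also have "\<dots> = \<sigma>\<^sup>2 / real t"
        using tt by (simp add: card_cartesian_product power2_eq_square field_simps)
      finally show ?thesis .
    qed
    have pos: "real t + G t > 0" using G0[of t] tt by simp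
    show ?thesis
      unfolding perf_ratio_def num den sumc
      using ratio_aux[OF assms(6) tt pos] by simp
  qed
  have part1: "\<forall>t\<ge>1. perf_ratio M A X \<theta> t =
           1 / (1 + (1 / real t) * (\<Sum>l=2..CARD('n). (1 - \<gamma> l ^ (2 * t)) / (1 - (\<gamma> l)\<^sup>2)))"
    using key by (simp add: G_def)
  have L: "finite {2..?N}" "{2..?N} \<noteq> {}" using assms(7) by auto
  note an = analytic_part[OF L, of \<gamma> "perf_ratio M A X \<theta>"]
  have gg: "\<And>l. l \<in> {2..?N} \<Longrightarrow> -1 < \<gamma> l \<and> \<gamma> l < 1" using assms(17) by auto
  show ?thesis using part1 an(1)[OF gg] an(2)[OF gg] part1 by auto
qed

end
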